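(* Let $G$ be a group and $\mathrm{Pr}(G)$ its predicatization in the language $\mathcal{L}_{g\text{-}pred}=\{M^{(3)},I^{(2)},E^{(1)}\}$. Then every direct power $\Pi\mathrm{Pr}(G)=\prod_{i\in I}\mathrm{Pr}(G)$ is $\mathcal{L}_{g\text{-}pred}(\Pi G)$-equationally Noetherian.
   Context: The predicatization $\mathrm{Pr}(G)$ is the structure with universe $G$ where $M(x,y,z)\Leftrightarrow xy=z$, $I(x,y)\Leftrightarrow x=y^{-1}$, $E(x)\Leftrightarrow x=1$. The direct power consists of all sequences $[g_i\mid i\in I]$, with each relation holding coordinatewise. $\mathcal{L}_{g\text{-}pred}(\Pi G)$ is the language extended by a constant symbol for every element of the direct power. An equation is an atomic formula of this language (a relation symbol applied to variables/constants, or an equality of two variables/constants); a system is any set of equations in a fixed finite set of variables; two systems are equivalent if they have the same solution set. A structure is $\mathcal{L}_{g\text{-}pred}(\Pi G)$-equationally Noetherian if every system is equivalent over it to a finite subsystem. *)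

theory Defs
  imports "HOL-Algebra.Group" "HOL-Library.FuncSet"
begin

text \<open>Terms of the language L_g-pred(Pi G): variables from 'v, or constants
  naming elements of the direct power (functions 'i => 'a).\<close>
datatype ('v, 'c) gterm = Var 'v | Cst 'c

datatype ('v, 'c) gatom =
    AM "('v, 'c) gterm" "('v, 'c) gterm" "('v, 'c) gterm"
  | AI "('v, 'c) gterm" "('v, 'c) gterm"
  | AE "('v, 'c) gterm"
  | AEq "('v, 'c) gterm" "('v, 'c) gterm"

definition dpower :: "('a, 'b) monoid_scheme \<Rightarrow> 'i set \<Rightarrow> ('i \<Rightarrow> 'a) set" where
  "dpower G I = PiE I (\<lambda>_. carrier G)"

fun gt_consts :: "('v, 'c) gterm \<Rightarrow> 'c set" where
  "gt_consts (Var x) = {}"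
| "gt_consts (Cst c) = {c}"

fun ga_consts :: "('v, 'c) gatom \<Rightarrow> 'c set" where
  "ga_consts (AM a b c) = gt_consts a \<union> gt_consts b \<union> gt_consts c"
| "ga_consts (AI a b) = gt_consts a \<union> gt_consts b"
| "ga_consts (AE a) = gt_consts a"
| "ga_consts (AEq a b) = gt_consts a \<union> gt_consts b"

definition is_equation :: "('a, 'b) monoid_scheme \<Rightarrow> 'i set \<Rightarrow> ('v, 'i \<Rightarrow> 'a) gatom \<Rightarrow> bool" where
  "is_equation G I e \<longleftrightarrow> ga_consts e \<subseteq> dpower G I"

fun gt_eval :: "('v \<Rightarrow> 'c) \<Rightarrow> ('v, 'c) gterm \<Rightarrow> 'c" where
  "gt_eval s (Var x) = s x"
| "gt_eval s (Cst c) = c"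

fun ga_holds :: "('a, 'b) monoid_scheme \<Rightarrow> 'i set \<Rightarrow> ('v \<Rightarrow> 'i \<Rightarrow> 'a) \<Rightarrow> ('v, 'i \<Rightarrow> 'a) gatom \<Rightarrow> bool" where
  "ga_holds G I s (AM a b c) =
     (\<forall>i\<in>I. gt_eval s a i \<otimes>\<^bsub>G\<^esub> gt_eval s b i = gt_eval s c i)"
| "ga_holds G I s (AI a b) = (\<forall>i\<in>I. gt_eval s a i = inv\<^bsub>G\<^esub> (gt_eval s b i))"
| "ga_holds G I s (AE a) = (\<forall>i\<in>I. gt_eval s a i = \<one>\<^bsub>G\<^esub>)"
| "ga_holds G I s (AEq a b) = (gt_eval s a = gt_eval s b)"

definition solset :: "('a, 'b) monoid_scheme \<Rightarrow> 'i set \<Rightarrow> ('v, 'i \<Rightarrow> 'a) gatom set \<Rightarrow> ('v \<Rightarrow> 'i \<Rightarrow> 'a) set" where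
  "solset G I S = {s. (\<forall>x. s x \<in> dpower G I) \<and> (\<forall>e\<in>S. ga_holds G I s e)}"

definition eq_noetherian :: "('a, 'b) monoid_scheme \<Rightarrow> 'i set \<Rightarrow> 'v itself \<Rightarrow> bool" where
  "eq_noetherian G I (_ :: 'v itself) \<longleftrightarrow>
     (\<forall>S :: ('v, 'i \<Rightarrow> 'a) gatom set. (\<forall>e\<in>S. is_equation G I e) \<longrightarrow>
        (\<exists>S0\<subseteq>S. finite S0 \<and> solset G I S0 = solset G I S))"

end

theory Submission
  imports Defs
begin

definition shape :: "('v, 'c) gatom \<Rightarrow> ('v, unit) gatom" where
  "shape e = map_gatom id (\<lambda>_. ()) e"

lemma dp_carr: "f \<in> dpower G I \<Longrightarrow> i \<in> I \<Longrightarrow> f i \<in> carrier G"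
  by (auto simp: dpower_def)

lemma (in group) lcanc: "x \<in> carrier G \<Longrightarrow> y \<in> carrier G \<Longrightarrow> z \<in> carrier G \<Longrightarrow> (x \<otimes> y = x \<otimes> z) = (y = z)"
  by (simp add: Units_eq)

definition rel2 where "rel2 sa sa' ta ta' \<longleftrightarrow> (sa = sa' \<and> ta = ta') \<or> (sa = ta \<and> sa' = ta')"

lemma (in group) Mcoord:
  assumes "rel2 sa sa' ta ta'" "rel2 sb sb' tb tb'" "rel2 sc sc' tc tc'"
    and "sa \<in> carrier G" "sb \<in> carrier G" "sc \<in> carrier G"
    and "sa' \<in> carrier G" "sb' \<in> carrier G" "sc' \<in> carrier G"
    and "ta \<in> carrier G" "tb \<in> carrier G" "tc \<in> carrier G"
    and "ta' \<in> carrier G" "tb' \<in> carrier G" "tc' \<in> carrier G"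
    and "sa \<otimes> sb = sc" "sa' \<otimes> sb' = sc'" "ta \<otimes> tb = tc"
  shows "ta' \<otimes> tb' = tc'"
  using assms unfolding rel2_def
  apply (elim disjE conjE)
  apply simp_all
  apply (metis lcanc)
  apply (metis right_cancel)
  apply (metis right_cancel)
  apply (metis lcanc)
  done

lemma (in group) Icoord:
  assumes "rel2 sa sa' ta ta'" "rel2 sb sb' tb tb'"
    and "sa \<in> carrier G" "sb \<in> carrier G"
    and "sa' \<in> carrier G" "sb' \<in> carrier G"
    and "ta \<in> carrier G" "tb \<in> carrier G"
    and "ta' \<in> carrier G" "tb' \<in> carrier G"
    and "sa = inv sb" "sa' = inv sb'" "ta = inv tb"
  shows "ta' = inv tb'"
  using assms unfolding rel2_def
  by (elim disjE conjE; simp; metis inv_inv)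

lemma rel2_term:
  assumes "map_gterm id (\<lambda>_. ()) a = map_gterm id (\<lambda>_. ()) a'"
  shows "rel2 (gt_eval s a i) (gt_eval s a' i) (gt_eval t a i) (gt_eval t a' i)"
  using assms by (cases a; cases a'; simp add: rel2_def)

lemma rel2_fun:
  assumes "map_gterm id (\<lambda>_. ()) a = map_gterm id (\<lambda>_. ()) a'"
  shows "rel2 (gt_eval s a) (gt_eval s a') (gt_eval t a) (gt_eval t a')"
  using assms by (cases a; cases a'; simp add: rel2_def)

lemma term_carr:
  assumes "gt_consts a \<subseteq> dpower G I" "\<forall>x. s x \<in> dpower G I" "i \<in> I"
  shows "gt_eval s a i \<in> carrier G"
  using assms by (cases a) (auto intro: dp_carr)

lemma Eqcase:
  assumes r: "map_gterm id (\<lambda>_. ()) a = map_gterm id (\<lambda>_. ()) a'"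
       "map_gterm id (\<lambda>_. ()) b = map_gterm id (\<lambda>_. ()) b'"
   and "gt_eval s a = gt_eval s b" "gt_eval s a' = gt_eval s b'" "gt_eval t a = gt_eval t b"
 shows "gt_eval t a' = gt_eval t b'"
  using assms
  apply (cases a; cases a'; cases b; cases b')
  apply simp_all
  done

lemma P:
  assumes G: "group G" and e: "is_equation G I e" and e': "is_equation G I e'"
    and sh: "shape e = shape e'"
    and s: "\<forall>x. s x \<in> dpower G I" "ga_holds G I s e" "ga_holds G I s e'"
    and t: "\<forall>x. t x \<in> dpower G I" "ga_holds G I t e"
  shows "ga_holds G I t e'"
proof -
  interpret group G by fact
  show ?thesis
  proof (cases e)
    case (AM a b c)
    then obtain a' b' c' where e'd: "e' = AM a' b' c'" using sh
      by (cases e') (auto simp: shape_def)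
    have r: "map_gterm id (\<lambda>_. ()) a = map_gterm id (\<lambda>_. ()) a'"
       "map_gterm id (\<lambda>_. ()) b = map_gterm id (\<lambda>_. ()) b'"
       "map_gterm id (\<lambda>_. ()) c = map_gterm id (\<lambda>_. ()) c'"
      using sh by (auto simp: AM e'd shape_def)
    have cs: "gt_consts a \<subseteq> dpower G I" "gt_consts b \<subseteq> dpower G I" "gt_consts c \<subseteq> dpower G I"
      "gt_consts a' \<subseteq> dpower G I" "gt_consts b' \<subseteq> dpower G I" "gt_consts c' \<subseteq> dpower G I"
      using e e' by (auto simp: AM e'd is_equation_def)
    show ?thesis unfolding e'd ga_holds.simps
    proof
      fix i assume i: "i \<in> I"
      show "gt_eval t a' i \<otimes>\<^bsub>G\<^esub> gt_eval t b' i = gt_eval t c' i"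
        apply (rule Mcoord[OF rel2_term[OF r(1), where s=s and t=t and i=i] rel2_term[OF r(2), where s=s and t=t and i=i] rel2_term[OF r(3), where s=s and t=t and i=i]])
        using term_carr[OF _ s(1) i] term_carr[OF _ t(1) i] cs
          s(2,3) t(2) i unfolding AM e'd by auto
    qed
  next
    case (AI a b)
    then obtain a' b' where e'd: "e' = AI a' b'" using sh
      by (cases e') (auto simp: shape_def)
    have r: "map_gterm id (\<lambda>_. ()) a = map_gterm id (\<lambda>_. ()) a'"
       "map_gterm id (\<lambda>_. ()) b = map_gterm id (\<lambda>_. ()) b'"
      using sh by (auto simp: AI e'd shape_def)
    have cs: "gt_consts a \<subseteq> dpower G I" "gt_consts b \<subseteq> dpower G I"
      "gt_consts a' \<subseteq> dpower G I" "gt_consts b' \<subseteq> dpower G I"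
      using e e' by (auto simp: AI e'd is_equation_def)
    show ?thesis unfolding e'd ga_holds.simps
    proof
      fix i assume i: "i \<in> I"
      show "gt_eval t a' i = inv\<^bsub>G\<^esub> gt_eval t b' i"
        apply (rule Icoord[OF rel2_term[OF r(1), where s=s and t=t and i=i] rel2_term[OF r(2), where s=s and t=t and i=i]])
        using term_carr[OF _ s(1) i] term_carr[OF _ t(1) i] cs
          s(2,3) t(2) i unfolding AI e'd by auto
    qed
  next
    case (AE a)
    then obtain a' where e'd: "e' = AE a'" using sh
      by (cases e') (auto simp: shape_def)
    have r: "map_gterm id (\<lambda>_. ()) a = map_gterm id (\<lambda>_. ()) a'"
      using sh by (auto simp: AE e'd shape_def)
    show ?thesis using r s t unfolding AE e'd
      by (cases a; cases a'; auto)
  next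
    case (AEq a b)
    then obtain a' b' where e'd: "e' = AEq a' b'" using sh
      by (cases e') (auto simp: shape_def)
    have r: "map_gterm id (\<lambda>_. ()) a = map_gterm id (\<lambda>_. ()) a'"
       "map_gterm id (\<lambda>_. ()) b = map_gterm id (\<lambda>_. ()) b'"
      using sh by (auto simp: AEq e'd shape_def)
    show ?thesis using s(2,3) t(2) unfolding AEq e'd ga_holds.simps by (rule Eqcase[OF r])
  qed
qed

lemma finite_gterm: "finite (UNIV :: ('v::finite, unit) gterm set)"
proof -
  have "(UNIV :: ('v, unit) gterm set) = range Var \<union> {Cst ()}"
  proof -
    have "x \<in> range Var \<union> {Cst ()}" for x :: "('v, unit) gterm" by (cases x) auto
    then show ?thesis by blast
  qed
  moreover have "finite (range (Var :: 'v \<Rightarrow> ('v, unit) gterm))" by simp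
  ultimately show ?thesis by (metis finite_insert Un_insert_right sup_bot.right_neutral)
qed

lemma finite_gatom: "finite (UNIV :: ('v::finite, unit) gatom set)"
proof -
  let ?T = "UNIV :: ('v, unit) gterm set"
  have "(UNIV :: ('v, unit) gatom set) \<subseteq>
     (\<lambda>(a,b,c). AM a b c) ` (?T \<times> ?T \<times> ?T) \<union> (\<lambda>(a,b). AI a b) ` (?T \<times> ?T)
     \<union> range AE \<union> (\<lambda>(a,b). AEq a b) ` (?T \<times> ?T)"
  proof
    fix x :: "('v, unit) gatom"
    show "x \<in> (\<lambda>(a,b,c). AM a b c) ` (?T \<times> ?T \<times> ?T) \<union> (\<lambda>(a,b). AI a b) ` (?T \<times> ?T)
     \<union> range AE \<union> (\<lambda>(a,b). AEq a b) ` (?T \<times> ?T)"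
      apply (cases x)
      subgoal for a b c by (rule UnI1, rule UnI1, rule UnI1, rule rev_image_eqI[of "(a,b,c)"]) auto
      subgoal for a b by (rule UnI1, rule UnI1, rule UnI2, rule rev_image_eqI[of "(a,b)"]) auto
      subgoal for a by (rule UnI1, rule UnI2) auto
      subgoal for a b by (rule UnI2, rule rev_image_eqI[of "(a,b)"]) auto
      done
  qed
  moreover have "finite ((\<lambda>(a,b,c). AM a b c) ` (?T \<times> ?T \<times> ?T) \<union> (\<lambda>(a,b). AI a b) ` (?T \<times> ?T)
     \<union> range AE \<union> (\<lambda>(a,b). AEq a b) ` (?T \<times> ?T))"
    by (intro finite_UnI finite_imageI finite_cartesian_product finite_gterm)
  ultimately show ?thesis by (rule finite_subset)
qed

theorem corollary1:
  fixes G :: "('a, 'b) monoid_scheme" and I :: "'i set"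
  assumes "group G"
  shows "eq_noetherian G I TYPE('v::finite)"
  unfolding eq_noetherian_def
proof (intro allI impI)
  fix S :: "('v, 'i \<Rightarrow> 'a) gatom set"
  assume eqs: "\<forall>e\<in>S. is_equation G I e"
  show "\<exists>S0\<subseteq>S. finite S0 \<and> solset G I S0 = solset G I S"
  proof (cases "\<exists>e\<in>S. \<exists>e'\<in>S. shape e = shape e' \<and> solset G I {e, e'} = {}")
    case True
    then obtain e e' where ee: "e \<in> S" "e' \<in> S" "solset G I {e, e'} = {}" by blast
    have "solset G I S \<subseteq> solset G I {e, e'}" using ee by (auto simp: solset_def)
    then have "solset G I S = {}" using ee by auto
    then show ?thesis using ee by (intro exI[of _ "{e, e'}"]) auto
  next
    case False
    define rep where "rep k = (SOME e. e \<in> S \<and> shape e = k)" for k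
    have rep: "rep (shape e) \<in> S \<and> shape (rep (shape e)) = shape e" if "e \<in> S" for e
      unfolding rep_def by (rule someI_ex) (use that in blast)
    define S0 where "S0 = rep ` shape ` S"
    have sub: "S0 \<subseteq> S" using rep by (auto simp: S0_def)
    have fin: "finite S0" unfolding S0_def
      by (intro finite_imageI finite_subset[OF _ finite_gatom]) auto
    have "solset G I S0 = solset G I S"
    proof
      show "solset G I S \<subseteq> solset G I S0" using sub by (auto simp: solset_def)
    next
      show "solset G I S0 \<subseteq> solset G I S"
      proof
        fix t assume t: "t \<in> solset G I S0"
        have "ga_holds G I t e" if e: "e \<in> S" for e
        proof -
          let ?r = "rep (shape e)"
          have r: "?r \<in> S" "shape ?r = shape e" using rep[OF e] by auto
          have "?r \<in> S0" using e by (auto simp: S0_def)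
          then have tr: "ga_holds G I t ?r" using t by (auto simp: solset_def)
          from False r e have "solset G I {?r, e} \<noteq> {}" by blast
          then obtain s where s: "s \<in> solset G I {?r, e}" by blast
          show ?thesis
            apply (rule P[OF assms _ _ r(2), where s=s and t=t])
            using eqs r e s t tr by (auto simp: solset_def)
        qed
        then show "t \<in> solset G I S" using t by (auto simp: solset_def)
      qed
    qed
    then show ?thesis using sub fin by blast
  qed
qed
end
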